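(* Consider the discrete setting described in the context and let $(F^n)_{n\ge0}=(f^n_{ij},g^n_{ij})$ solve the linearized scheme given there. Let $h^n_{ij}=f^n_{ij}-g^n_{ij}$ and define the discrete moments $u^n_{h,i}=\sum_j\Delta v\,h^n_{ij}$, $J^n_{h,i}=\sum_j\Delta v\,v_j h^n_{ij}$, $S^n_{h,i}=\sum_j\Delta v\,(v_j^2-D_0^\Delta)h^n_{ij}$, and $J^n_{f,i}=\sum_j\Delta v\,v_jf^n_{ij}$, $J^n_{g,i}=\sum_j\Delta v\,v_jg^n_{ij}$. Then for all $n\ge0$: $$\|u^n_h\|_2=C_u^*\|\Pi^\Delta F^n\|_\Delta,\quad \|J^n_h\|_2\le C^*_{J1}\|F^n\|_\Delta,\quad \|J^n_h\|_2\le C^*_{J1}\|(I-\Pi^\Delta)F^n\|_\Delta,$$ $$\|S^n_h\|_2\le C^*_S\|(I-\Pi^\Delta)F^n\|_\Delta,\quad \|(\rho_\infty^* )^{-1}J^n_f-\rho_\infty^*J^n_g\|_2\le C^*_{J2}\|(I-\Pi^\Delta)F^n\|_\Delta,$$ where $C_u^*=\sqrt{((\rho_\infty^* )^2+1)/\rho_\infty^*}$, $C^*_{J1}=\sqrt{2\max(\rho_\infty^*\overline D_1,(\rho_\infty^* )^{-1}\overline D_2)}$, $C_S^*=\sqrt{2\max\big(\rho_\infty^*(\overline Q_1-2\underline D_0\underline D_1+\overline D_0^2),(\rho_\infty^* )^{-1}(\overline Q_2-2\underline D_0\underline D_2+\overline D_0^2)\big)}$, $C^*_{J2}=\max((\rho_\infty^*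 )^{-1},\rho_\infty^* )C^*_{J1}$.
   Context: Space mesh: $N$ uniform cells of length $\Delta x$ of the torus, indexed by $i\in\mathcal I=\mathbb Z/N\mathbb Z$ (periodic). Velocity mesh: $\Delta v=v^*/L$, cells indexed by $j\in\mathcal J=\{-L+1,\dots,L\}$ with midpoints $v_j=(j-\tfrac12)\Delta v$. Time step $\Delta t>0$; $\lambda=\Delta x/(2\Delta t)$ a fixed positive constant. Fixed $\rho_\infty^*>0$. For $k=1,2$: $\chi_{k,j}>0$, $\chi_{k,j}=\chi_{k,1-j}$, $\sum_j\Delta v\,\chi_{k,j}=1$, $0<\underline D_k\le D_k^\Delta:=\sum_j\Delta v\,v_j^2\chi_{k,j}\le\overline D_k$, $Q_k^\Delta:=\sum_j\Delta v\,v_j^4\chi_{k,j}\le\overline Q_k$. $D_0^\Delta=\frac{(\rho_\infty^* )^2D_1^\Delta+D_2^\Delta}{(\rho_\infty^* )^2+1}$, and $\underline D_0,\overline D_0$ are constants with $\underline D_0\le D_0^\Delta\le\overline D_0$. Densities $\rho_{f,i}=\sum_j\Delta v f_{ij}$, $\rho_{g,i}=\sum_j\Delta v g_{ij}$. Linearized scheme ($n\ge0$): $\frac{f^{n+1}_{ij}-f^n_{ij}}{\Delta t}+\frac{1}{\Delta x\Delta v}(\mathcal F^{n+1}_{i+\frac12,j}-\mathcal F^{n+1}_{i-\frac12,j})=-\rho_\infty^*\chi_{1,j}\rho^{n+1}_{g,i}-(\rho_\infty^* )^{-1}f^{n+1}_{ij}$ and $\frac{g^{n+1}_{ij}-g^n_{ij}}{\Delta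 t}+\frac{1}{\Delta x\Delta v}(\mathcal G^{n+1}_{i+\frac12,j}-\mathcal G^{n+1}_{i-\frac12,j})=-(\rho_\infty^* )^{-1}\chi_{2,j}\rho^{n+1}_{f,i}-\rho_\infty^*g^{n+1}_{ij}$, with $\mathcal F^{n+1}_{i+\frac12,j}=\Delta v\frac{v_j}{2}(f^{n+1}_{i+1,j}+f^{n+1}_{ij})-\Delta v\lambda(f^{n+1}_{i+1,j}-f^{n+1}_{ij})$ and $\mathcal G$ likewise with $g$. Norms: $\|u\|_2^2=\sum_i\Delta x\,u_i^2$; $\|F\|_\Delta^2=\sum_{i,j}\Delta x\Delta v\big(\frac{f_{ij}^2}{\chi_{1,j}\rho_\infty^*}+\frac{g_{ij}^2\rho_\infty^*}{\chi_{2,j}}\big)$. Projection: $(\Pi^\Delta F)_{ij}=\frac{\rho_{f,i}-\rho_{g,i}}{(\rho_\infty^* )^2+1}((\rho_\infty^* )^2\chi_{1,j},-\chi_{2,j})$. *)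

theory Defs
  imports Complex_Main
begin

definition Jset :: "nat \<Rightarrow> int set" where
  "Jset L = {- int L + 1 .. int L}"

definition vel :: "real \<Rightarrow> int \<Rightarrow> real" where
  "vel dv j = (real_of_int j - 1/2) * dv"

definition vsum :: "nat \<Rightarrow> real \<Rightarrow> (int \<Rightarrow> real) \<Rightarrow> real" where
  "vsum L dv \<phi> = (\<Sum>j\<in>Jset L. dv * \<phi> j)"

text \<open>Periodic neighbours on the torus Z/NZ, represented by {0..<N}.\<close>
definition nxt :: "nat \<Rightarrow> nat \<Rightarrow> nat" where
  "nxt N i = (Suc i) mod N"

definition prv :: "nat \<Rightarrow> nat \<Rightarrow> nat" where
  "prv N i = (i + N - 1) mod N"

definition flux :: "nat \<Rightarrow> real \<Rightarrow> real \<Rightarrow> (nat \<Rightarrow> int \<Rightarrow> real) \<Rightarrow> nat \<Rightarrow> int \<Rightarrow> real" where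
  "flux N dv lam \<phi> i j =
     dv * (vel dv j / 2) * (\<phi> (nxt N i) j + \<phi> i j) - dv * lam * (\<phi> (nxt N i) j - \<phi> i j)"

definition l2norm :: "nat \<Rightarrow> real \<Rightarrow> (nat \<Rightarrow> real) \<Rightarrow> real" where
  "l2norm N dx u = sqrt (\<Sum>i<N. dx * (u i)\<^sup>2)"

definition Dnorm :: "nat \<Rightarrow> nat \<Rightarrow> real \<Rightarrow> real \<Rightarrow> real \<Rightarrow> (int \<Rightarrow> real) \<Rightarrow> (int \<Rightarrow> real)
                    \<Rightarrow> (nat \<Rightarrow> int \<Rightarrow> real) \<Rightarrow> (nat \<Rightarrow> int \<Rightarrow> real) \<Rightarrow> real" where
  "Dnorm N L dx dv \<rho> \<chi>1 \<chi>2 f g =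
     sqrt (\<Sum>i<N. \<Sum>j\<in>Jset L. dx * dv * ((f i j)\<^sup>2 / (\<chi>1 j * \<rho>) + (g i j)\<^sup>2 * \<rho> / \<chi>2 j))"

definition Pi_f :: "nat \<Rightarrow> real \<Rightarrow> real \<Rightarrow> (int \<Rightarrow> real) \<Rightarrow> (nat \<Rightarrow> int \<Rightarrow> real) \<Rightarrow> (nat \<Rightarrow> int \<Rightarrow> real)
                    \<Rightarrow> nat \<Rightarrow> int \<Rightarrow> real" where
  "Pi_f L dv \<rho> \<chi>1 f g i j =
     (vsum L dv (f i) - vsum L dv (g i)) / (\<rho>\<^sup>2 + 1) * (\<rho>\<^sup>2 * \<chi>1 j)"

definition Pi_g :: "nat \<Rightarrow> real \<Rightarrow> real \<Rightarrow> (int \<Rightarrow> real) \<Rightarrow> (nat \<Rightarrow> int \<Rightarrow> real) \<Rightarrow> (nat \<Rightarrow> int \<Rightarrow> real)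
                    \<Rightarrow> nat \<Rightarrow> int \<Rightarrow> real" where
  "Pi_g L dv \<rho> \<chi>2 f g i j =
     (vsum L dv (f i) - vsum L dv (g i)) / (\<rho>\<^sup>2 + 1) * (- \<chi>2 j)"

end

theory Submission imports Defs "HOL-Analysis.Analysis" begin

lemma cs_w:
  fixes dv :: real and S :: "int set"
  assumes "dv > 0" "\<forall>j\<in>S. w j > 0"
  shows "(\<Sum>j\<in>S. dv*(\<phi> j * x j))\<^sup>2 \<le> (\<Sum>j\<in>S. dv*((\<phi> j)\<^sup>2 * w j)) * (\<Sum>j\<in>S. dv*((x j)\<^sup>2 / w j))"
proof -
  have e1: "(\<Sum>j\<in>S. dv*(\<phi> j * x j)) = (\<Sum>j\<in>S. (sqrt (dv * w j) * \<phi> j) * (sqrt (dv / w j) * x j))"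
  proof (rule sum.cong)
    fix j assume "j \<in> S"
    hence "w j > 0" using assms by auto
    hence "sqrt (dv * w j) * sqrt (dv / w j) = dv"
      using assms(1) by (simp add: real_sqrt_mult[symmetric])
    thus "dv*(\<phi> j * x j) = (sqrt (dv * w j) * \<phi> j) * (sqrt (dv / w j) * x j)"
      by (metis mult.assoc mult.left_commute)
  qed simp
  have e2: "(\<Sum>j\<in>S. dv*((\<phi> j)\<^sup>2 * w j)) = (\<Sum>j\<in>S. (sqrt (dv * w j) * \<phi> j)\<^sup>2)"
  proof (rule sum.cong)
    fix j assume "j \<in> S"
    hence "w j > 0" using assms by auto
    thus "dv*((\<phi> j)\<^sup>2 * w j) = (sqrt (dv * w j) * \<phi> j)\<^sup>2"
      using assms(1) by (simp add: power_mult_distrib)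
  qed simp
  have e3: "(\<Sum>j\<in>S. dv*((x j)\<^sup>2 / w j)) = (\<Sum>j\<in>S. (sqrt (dv / w j) * x j)\<^sup>2)"
  proof (rule sum.cong)
    fix j assume "j \<in> S"
    hence "w j > 0" using assms by auto
    thus "dv*((x j)\<^sup>2 / w j) = (sqrt (dv / w j) * x j)\<^sup>2"
      using assms(1) by (simp add: power_mult_distrib)
  qed simp
  show ?thesis unfolding e1 e2 e3 by (rule Cauchy_Schwarz_ineq_sum)
qed

lemma l2bound:
  assumes "dx > 0" "K \<ge> 0" "\<forall>i<N. (p i)\<^sup>2 \<le> K * E i"
  shows "l2norm N dx p \<le> sqrt K * sqrt (\<Sum>i<N. dx * E i)"
proof -
  have "(\<Sum>i<N. dx*(p i)\<^sup>2) \<le> (\<Sum>i<N. K*(dx*E i))"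
  proof (rule sum_mono)
    fix i assume "i \<in> {..<N}"
    hence "dx * (p i)\<^sup>2 \<le> dx * (K * E i)" using assms by (intro mult_left_mono) auto
    thus "dx*(p i)\<^sup>2 \<le> K*(dx*E i)" by (simp add: algebra_simps)
  qed
  also have "\<dots> = K * (\<Sum>i<N. dx * E i)" by (simp add: sum_distrib_left)
  finally show ?thesis unfolding l2norm_def by (metis real_sqrt_le_mono real_sqrt_mult)
qed

lemma Dnorm_eq:
  "Dnorm N L dx dv \<rho> \<chi>1 \<chi>2 f g = sqrt (\<Sum>i<N. dx * (vsum L dv (\<lambda>j. (f i j)\<^sup>2 / (\<chi>1 j * \<rho>)) + vsum L dv (\<lambda>j. (g i j)\<^sup>2 * \<rho> / \<chi>2 j)))"
  unfolding Dnorm_def vsum_def by (simp add: sum_distrib_left sum.distrib algebra_simps)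

lemma comb:
  fixes a b A B \<alpha> \<beta> M c c1 c2 :: real
  assumes "a\<^sup>2 \<le> \<alpha> * A" "b\<^sup>2 \<le> \<beta> * B" "0 \<le> A" "0 \<le> B" "\<alpha> \<le> M" "\<beta> \<le> M" "\<bar>c1\<bar> \<le> c" "\<bar>c2\<bar> \<le> c"
  shows "(c1 * a - c2 * b)\<^sup>2 \<le> (c\<^sup>2 * (2 * M)) * (A + B)"
proof -
  have "\<bar>c1 * a - c2 * b\<bar> \<le> c * (\<bar>a\<bar> + \<bar>b\<bar>)"
  proof -
    have "\<bar>c1 * a - c2 * b\<bar> \<le> \<bar>c1\<bar> * \<bar>a\<bar> + \<bar>c2\<bar> * \<bar>b\<bar>" by (simp add: abs_mult abs_triangle_ineq4 order_trans[OF abs_triangle_ineq4])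
    also have "\<dots> \<le> c * \<bar>a\<bar> + c * \<bar>b\<bar>" using assms by (intro add_mono mult_right_mono) auto
    finally show ?thesis by (simp add: algebra_simps)
  qed
  hence "(c1 * a - c2 * b)\<^sup>2 \<le> (c * (\<bar>a\<bar> + \<bar>b\<bar>))\<^sup>2"
    by (metis abs_ge_zero order_trans power2_abs power_mono)
  also have "\<dots> = c\<^sup>2 * (\<bar>a\<bar> + \<bar>b\<bar>)\<^sup>2" by (simp add: power_mult_distrib)
  also have "\<dots> \<le> c\<^sup>2 * (2 * (a\<^sup>2 + b\<^sup>2))"
  proof (rule mult_left_mono)
    have "0 \<le> (\<bar>a\<bar> - \<bar>b\<bar>)\<^sup>2" by simp
    thus "(\<bar>a\<bar> + \<bar>b\<bar>)\<^sup>2 \<le> 2 * (a\<^sup>2 + b\<^sup>2)" by (simp add: power2_eq_square algebra_simps)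
  qed simp
  also have "\<dots> \<le> c\<^sup>2 * (2 * (M * A + M * B))"
  proof -
    have "\<alpha> * A \<le> M * A" "\<beta> * B \<le> M * B" using assms by (auto intro: mult_right_mono)
    hence "a\<^sup>2 + b\<^sup>2 \<le> M * A + M * B" using assms by linarith
    thus ?thesis by (intro mult_left_mono) auto
  qed
  finally show ?thesis by (simp add: algebra_simps)
qed


lemma vsum_nonneg: "dv \<ge> 0 \<Longrightarrow> (\<forall>j\<in>Jset L. 0 \<le> \<phi> j) \<Longrightarrow> 0 \<le> vsum L dv \<phi>"
  unfolding vsum_def by (intro sum_nonneg) auto

lemma vsum_cmult: "vsum L dv (\<lambda>j. a * \<phi> j) = a * vsum L dv \<phi>"
  unfolding vsum_def by (simp add: sum_distrib_left algebra_simps)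

lemma vsum_diff: "vsum L dv (\<lambda>j. \<phi> j - \<psi> j) = vsum L dv \<phi> - vsum L dv \<psi>"
  unfolding vsum_def by (simp add: sum_subtractf algebra_simps)

lemma vsum_add: "vsum L dv (\<lambda>j. \<phi> j + \<psi> j) = vsum L dv \<phi> + vsum L dv \<psi>"
  unfolding vsum_def by (simp add: sum.distrib algebra_simps)

lemma gen_bound:
  fixes f g :: "nat \<Rightarrow> int \<Rightarrow> real" and \<phi> :: "int \<Rightarrow> real"
  assumes dv: "dv > 0" and dx: "dx > 0" and rho: "\<rho> > 0"
    and chi1: "\<forall>j\<in>Jset L. 0 < \<chi>1 j" and chi2: "\<forall>j\<in>Jset L. 0 < \<chi>2 j"
    and c1: "\<bar>c1\<bar> \<le> c" and c2: "\<bar>c2\<bar> \<le> c"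
    and M1: "\<rho> * vsum L dv (\<lambda>j. (\<phi> j)\<^sup>2 * \<chi>1 j) \<le> M"
    and M2: "inverse \<rho> * vsum L dv (\<lambda>j. (\<phi> j)\<^sup>2 * \<chi>2 j) \<le> M"
  shows "l2norm N dx (\<lambda>i. c1 * vsum L dv (\<lambda>j. \<phi> j * f i j) - c2 * vsum L dv (\<lambda>j. \<phi> j * g i j))
         \<le> c * sqrt (2 * M) * Dnorm N L dx dv \<rho> \<chi>1 \<chi>2 f g"
proof -
  have c0: "c \<ge> 0" using c1 by linarith
  have "0 \<le> \<rho> * vsum L dv (\<lambda>j. (\<phi> j)\<^sup>2 * \<chi>1 j)"
    using rho dv chi1 by (intro mult_nonneg_nonneg vsum_nonneg) (auto intro: less_imp_le)
  hence M0: "M \<ge> 0" using M1 by linarith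
  have pt: "(c1 * vsum L dv (\<lambda>j. \<phi> j * f i j) - c2 * vsum L dv (\<lambda>j. \<phi> j * g i j))\<^sup>2
     \<le> (c\<^sup>2 * (2 * M)) * (vsum L dv (\<lambda>j. (f i j)\<^sup>2 / (\<chi>1 j * \<rho>)) + vsum L dv (\<lambda>j. (g i j)\<^sup>2 * \<rho> / \<chi>2 j))" for i
  proof (rule comb[OF _ _ _ _ M1 M2 c1 c2])
    have w1: "\<forall>j\<in>Jset L. \<chi>1 j * \<rho> > 0" using chi1 rho by auto
    have "(vsum L dv (\<lambda>j. \<phi> j * f i j))\<^sup>2 \<le> vsum L dv (\<lambda>j. (\<phi> j)\<^sup>2 * (\<chi>1 j * \<rho>)) * vsum L dv (\<lambda>j. (f i j)\<^sup>2 / (\<chi>1 j * \<rho>))"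
      unfolding vsum_def by (rule cs_w[OF dv w1])
    also have "vsum L dv (\<lambda>j. (\<phi> j)\<^sup>2 * (\<chi>1 j * \<rho>)) = \<rho> * vsum L dv (\<lambda>j. (\<phi> j)\<^sup>2 * \<chi>1 j)"
      using vsum_cmult[of L dv \<rho> "\<lambda>j. (\<phi> j)\<^sup>2 * \<chi>1 j"] by (simp add: algebra_simps)
    finally show "(vsum L dv (\<lambda>j. \<phi> j * f i j))\<^sup>2 \<le> \<rho> * vsum L dv (\<lambda>j. (\<phi> j)\<^sup>2 * \<chi>1 j) * vsum L dv (\<lambda>j. (f i j)\<^sup>2 / (\<chi>1 j * \<rho>))" .
  next
    have w2: "\<forall>j\<in>Jset L. \<chi>2 j / \<rho> > 0" using chi2 rho by auto
    have "(vsum L dv (\<lambda>j. \<phi> j * g i j))\<^sup>2 \<le> vsum L dv (\<lambda>j. (\<phi> j)\<^sup>2 * (\<chi>2 j / \<rho>)) * vsum L dv (\<lambda>j. (g i j)\<^sup>2 / (\<chi>2 j / \<rho>))"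
      unfolding vsum_def by (rule cs_w[OF dv w2])
    also have "vsum L dv (\<lambda>j. (\<phi> j)\<^sup>2 * (\<chi>2 j / \<rho>)) = inverse \<rho> * vsum L dv (\<lambda>j. (\<phi> j)\<^sup>2 * \<chi>2 j)"
      using vsum_cmult[of L dv "inverse \<rho>" "\<lambda>j. (\<phi> j)\<^sup>2 * \<chi>2 j"] by (simp add: field_simps)
    also have "vsum L dv (\<lambda>j. (g i j)\<^sup>2 / (\<chi>2 j / \<rho>)) = vsum L dv (\<lambda>j. (g i j)\<^sup>2 * \<rho> / \<chi>2 j)"
      by simp
    finally show "(vsum L dv (\<lambda>j. \<phi> j * g i j))\<^sup>2 \<le> inverse \<rho> * vsum L dv (\<lambda>j. (\<phi> j)\<^sup>2 * \<chi>2 j) * vsum L dv (\<lambda>j. (g i j)\<^sup>2 * \<rho> / \<chi>2 j)" .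
  next
    show "0 \<le> vsum L dv (\<lambda>j. (f i j)\<^sup>2 / (\<chi>1 j * \<rho>))"
      using dv chi1 rho by (intro vsum_nonneg) auto
    show "0 \<le> vsum L dv (\<lambda>j. (g i j)\<^sup>2 * \<rho> / \<chi>2 j)"
      using dv chi2 rho by (intro vsum_nonneg) auto
  qed
  have "l2norm N dx (\<lambda>i. c1 * vsum L dv (\<lambda>j. \<phi> j * f i j) - c2 * vsum L dv (\<lambda>j. \<phi> j * g i j))
     \<le> sqrt (c\<^sup>2 * (2 * M)) * Dnorm N L dx dv \<rho> \<chi>1 \<chi>2 f g"
    unfolding Dnorm_eq using pt M0 dx by (intro l2bound) auto
  also have "sqrt (c\<^sup>2 * (2 * M)) = c * sqrt (2 * M)" using c0 by (simp add: real_sqrt_mult)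
  finally show ?thesis .
qed

lemma vel_sym0:
  assumes "\<forall>j\<in>Jset L. ch j = ch (1 - j)"
  shows "vsum L dv (\<lambda>j. vel dv j * ch j) = 0"
proof -
  let ?F = "\<lambda>j. dv * (vel dv j * ch j)"
  have "(\<Sum>j\<in>Jset L. ?F j) = (\<Sum>j\<in>Jset L. ?F (1 - j))"
    by (rule sum.reindex_bij_witness[of _ "\<lambda>j. 1 - j" "\<lambda>j. 1 - j"]) (auto simp: Jset_def)
  also have "\<dots> = (\<Sum>j\<in>Jset L. - ?F j)"
    using assms by (intro sum.cong) (auto simp: vel_def algebra_simps)
  also have "\<dots> = - (\<Sum>j\<in>Jset L. ?F j)" by (simp add: sum_negf)
  finally show ?thesis unfolding vsum_def by simp
qed


lemma vsum_mdiff: "vsum L dv (\<lambda>j. \<phi> j * (x j - y j)) = vsum L dv (\<lambda>j. \<phi> j * x j) - vsum L dv (\<lambda>j. \<phi> j * y j)"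
  unfolding vsum_def by (simp add: sum_subtractf algebra_simps)

lemma vsum_Pi_f: "vsum L dv (\<lambda>j. \<phi> j * Pi_f L dv \<rho> \<chi>1 F G i j)
   = (vsum L dv (F i) - vsum L dv (G i)) / (\<rho>\<^sup>2 + 1) * \<rho>\<^sup>2 * vsum L dv (\<lambda>j. \<phi> j * \<chi>1 j)"
  unfolding Pi_f_def
  using vsum_cmult[of L dv "(vsum L dv (F i) - vsum L dv (G i)) / (\<rho>\<^sup>2 + 1) * \<rho>\<^sup>2" "\<lambda>j. \<phi> j * \<chi>1 j"]
  by (simp add: algebra_simps)

lemma vsum_Pi_g: "vsum L dv (\<lambda>j. \<phi> j * Pi_g L dv \<rho> \<chi>2 F G i j)
   = - ((vsum L dv (F i) - vsum L dv (G i)) / (\<rho>\<^sup>2 + 1) * vsum L dv (\<lambda>j. \<phi> j * \<chi>2 j))"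
proof -
  have "(\<lambda>j. \<phi> j * Pi_g L dv \<rho> \<chi>2 F G i j) = (\<lambda>j. (- ((vsum L dv (F i) - vsum L dv (G i)) / (\<rho>\<^sup>2 + 1))) * (\<phi> j * \<chi>2 j))"
    unfolding Pi_g_def by (rule ext) (simp only: mult_minus_right mult_minus_left mult_ac)
  thus ?thesis by (simp only: vsum_cmult)
qed

lemma vsum_cong: "(\<And>j. j \<in> Jset L \<Longrightarrow> \<phi> j = \<psi> j) \<Longrightarrow> vsum L dv \<phi> = vsum L dv \<psi>"
  unfolding vsum_def by (auto intro: sum.cong)

lemma vsum_sq_expand: "vsum L dv (\<lambda>j. ((vel dv j)\<^sup>2 - D)\<^sup>2 * ch j)
  = vsum L dv (\<lambda>j. (vel dv j)^4 * ch j) - 2 * D * vsum L dv (\<lambda>j. (vel dv j)\<^sup>2 * ch j) + D\<^sup>2 * vsum L dv ch"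
proof -
  have "vsum L dv (\<lambda>j. ((vel dv j)\<^sup>2 - D)\<^sup>2 * ch j)
     = vsum L dv (\<lambda>j. (vel dv j)^4 * ch j - (2 * D) * ((vel dv j)\<^sup>2 * ch j) + D\<^sup>2 * ch j)"
    by (intro vsum_cong) (simp add: power2_diff algebra_simps flip: power_mult power2_eq_square)
  also have "\<dots> = vsum L dv (\<lambda>j. (vel dv j)^4 * ch j) - 2 * D * vsum L dv (\<lambda>j. (vel dv j)\<^sup>2 * ch j) + D\<^sup>2 * vsum L dv ch"
    by (simp only: vsum_add vsum_diff vsum_cmult)
  finally show ?thesis .
qed

theorem lemma4p3:
  fixes N L :: nat
    and dx dt vstar dv lam \<rho> :: real
    and \<chi>1 \<chi>2 :: "int \<Rightarrow> real"
    and D1lo D1up D2lo D2up Q1up Q2up D0lo D0up :: real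
    and f g :: "nat \<Rightarrow> nat \<Rightarrow> int \<Rightarrow> real"
    and n :: nat
  defines "D1 \<equiv> vsum L dv (\<lambda>j. (vel dv j)\<^sup>2 * \<chi>1 j)"
    and "D2 \<equiv> vsum L dv (\<lambda>j. (vel dv j)\<^sup>2 * \<chi>2 j)"
    and "Q1 \<equiv> vsum L dv (\<lambda>j. (vel dv j)^4 * \<chi>1 j)"
    and "Q2 \<equiv> vsum L dv (\<lambda>j. (vel dv j)^4 * \<chi>2 j)"
    and "D0 \<equiv> (\<rho>\<^sup>2 * vsum L dv (\<lambda>j. (vel dv j)\<^sup>2 * \<chi>1 j)
                 + vsum L dv (\<lambda>j. (vel dv j)\<^sup>2 * \<chi>2 j)) / (\<rho>\<^sup>2 + 1)"
  assumes N_pos: "0 < N"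
    and dx_pos: "0 < dx"
    and L_pos: "0 < L"
    and vstar_pos: "0 < vstar"
    and dv_def: "dv = vstar / real L"
    and dt_pos: "0 < dt"
    and lam_def: "lam = dx / (2 * dt)"
    and rho_pos: "0 < \<rho>"
    and chi1_pos: "\<forall>j\<in>Jset L. 0 < \<chi>1 j"
    and chi2_pos: "\<forall>j\<in>Jset L. 0 < \<chi>2 j"
    and chi1_sym: "\<forall>j\<in>Jset L. \<chi>1 j = \<chi>1 (1 - j)"
    and chi2_sym: "\<forall>j\<in>Jset L. \<chi>2 j = \<chi>2 (1 - j)"
    and chi1_mass: "vsum L dv \<chi>1 = 1"
    and chi2_mass: "vsum L dv \<chi>2 = 1"
    and D1_bounds: "0 < D1lo" "D1lo \<le> D1" "D1 \<le> D1up"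
    and D2_bounds: "0 < D2lo" "D2lo \<le> D2" "D2 \<le> D2up"
    and Q1_bound: "Q1 \<le> Q1up"
    and Q2_bound: "Q2 \<le> Q2up"
    and D0_bounds: "D0lo \<le> D0" "D0 \<le> D0up"
    and scheme_f: "\<forall>m i j. i < N \<longrightarrow> j \<in> Jset L \<longrightarrow>
        (f (Suc m) i j - f m i j) / dt
        + (flux N dv lam (f (Suc m)) i j - flux N dv lam (f (Suc m)) (prv N i) j) / (dx * dv)
        = - \<rho> * \<chi>1 j * vsum L dv (g (Suc m) i) - inverse \<rho> * f (Suc m) i j"
    and scheme_g: "\<forall>m i j. i < N \<longrightarrow> j \<in> Jset L \<longrightarrow>
        (g (Suc m) i j - g m i j) / dt
        + (flux N dv lam (g (Suc m)) i j - flux N dv lam (g (Suc m)) (prv N i) j) / (dx * dv)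
        = - inverse \<rho> * \<chi>2 j * vsum L dv (f (Suc m) i) - \<rho> * g (Suc m) i j"
  shows
   "let h = (\<lambda>i j. f n i j - g n i j);
        uh = (\<lambda>i. vsum L dv (h i));
        Jh = (\<lambda>i. vsum L dv (\<lambda>j. vel dv j * h i j));
        Sh = (\<lambda>i. vsum L dv (\<lambda>j. ((vel dv j)\<^sup>2 - D0) * h i j));
        Jf = (\<lambda>i. vsum L dv (\<lambda>j. vel dv j * f n i j));
        Jg = (\<lambda>i. vsum L dv (\<lambda>j. vel dv j * g n i j));
        PF = Dnorm N L dx dv \<rho> \<chi>1 \<chi>2 (Pi_f L dv \<rho> \<chi>1 (f n) (g n)) (Pi_g L dv \<rho> \<chi>2 (f n) (g n));
        FF = Dnorm N L dx dv \<rho> \<chi>1 \<chi>2 (f n) (g n);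
        QF = Dnorm N L dx dv \<rho> \<chi>1 \<chi>2
               (\<lambda>i j. f n i j - Pi_f L dv \<rho> \<chi>1 (f n) (g n) i j)
               (\<lambda>i j. g n i j - Pi_g L dv \<rho> \<chi>2 (f n) (g n) i j);
        Cu = sqrt ((\<rho>\<^sup>2 + 1) / \<rho>);
        CJ1 = sqrt (2 * max (\<rho> * D1up) (inverse \<rho> * D2up));
        CS = sqrt (2 * max (\<rho> * (Q1up - 2 * D0lo * D1lo + D0up\<^sup>2))
                           (inverse \<rho> * (Q2up - 2 * D0lo * D2lo + D0up\<^sup>2)));
        CJ2 = max (inverse \<rho>) \<rho> * CJ1
    in l2norm N dx uh = Cu * PF
     \<and> l2norm N dx Jh \<le> CJ1 * FF
     \<and> l2norm N dx Jh \<le> CJ1 * QF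
     \<and> l2norm N dx Sh \<le> CS * QF
     \<and> l2norm N dx (\<lambda>i. inverse \<rho> * Jf i - \<rho> * Jg i) \<le> CJ2 * QF"
  proof -
  have dv: "dv > 0" using dv_def vstar_pos L_pos by simp
  have rho2: "\<rho>\<^sup>2 + 1 > 0" by (metis add_pos_nonneg zero_less_one zero_le_power2 add.commute)
  have D1pos: "D1 > 0" and D2pos: "D2 > 0" using D1_bounds D2_bounds by linarith+
  have D0pos: "D0 > 0" unfolding D0_def D1_def[symmetric] D2_def[symmetric]
    using D1pos D2pos rho2 rho_pos by (intro divide_pos_pos add_pos_pos mult_pos_pos) auto
  have D0eq: "(\<rho>\<^sup>2 + 1) * D0 = \<rho>\<^sup>2 * D1 + D2"
    unfolding D0_def D1_def[symmetric] D2_def[symmetric] using rho2 by simp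
  have s1: "vsum L dv (\<lambda>j. vel dv j * \<chi>1 j) = 0" by (rule vel_sym0[OF chi1_sym])
  have s2: "vsum L dv (\<lambda>j. vel dv j * \<chi>2 j) = 0" by (rule vel_sym0[OF chi2_sym])
  define a where "a = (\<lambda>i. (vsum L dv (f n i) - vsum L dv (g n i)) / (\<rho>\<^sup>2 + 1))"
  have aI: "(vsum L dv (f n i) - vsum L dv (g n i)) / (\<rho>\<^sup>2 + 1) = a i" for i by (simp add: a_def)
  define M where "M = max (\<rho> * D1up) (inverse \<rho> * D2up)"
  have MJ1: "\<rho> * vsum L dv (\<lambda>j. (vel dv j)\<^sup>2 * \<chi>1 j) \<le> M"
    unfolding M_def D1_def[symmetric] using D1_bounds rho_pos by (simp add: max.coboundedI1)
  have MJ2: "inverse \<rho> * vsum L dv (\<lambda>j. (vel dv j)\<^sup>2 * \<chi>2 j) \<le> M"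
    unfolding M_def D2_def[symmetric] using D2_bounds rho_pos by (simp add: max.coboundedI2)
  define f' where "f' = (\<lambda>i j. f n i j - Pi_f L dv \<rho> \<chi>1 (f n) (g n) i j)"
  define g' where "g' = (\<lambda>i j. g n i j - Pi_g L dv \<rho> \<chi>2 (f n) (g n) i j)"
  have Jf': "vsum L dv (\<lambda>j. vel dv j * f' i j) = vsum L dv (\<lambda>j. vel dv j * f n i j)" for i
    unfolding f'_def vsum_mdiff vsum_Pi_f s1 by simp
  have Jg': "vsum L dv (\<lambda>j. vel dv j * g' i j) = vsum L dv (\<lambda>j. vel dv j * g n i j)" for i
    unfolding g'_def vsum_mdiff vsum_Pi_g s2 by simp
  have c1: "l2norm N dx (\<lambda>i. vsum L dv (\<lambda>j. f n i j - g n i j))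
      = sqrt ((\<rho>\<^sup>2 + 1) / \<rho>) * Dnorm N L dx dv \<rho> \<chi>1 \<chi>2 (Pi_f L dv \<rho> \<chi>1 (f n) (g n)) (Pi_g L dv \<rho> \<chi>2 (f n) (g n))"
  proof -
    have e1: "vsum L dv (\<lambda>j. (Pi_f L dv \<rho> \<chi>1 (f n) (g n) i j)\<^sup>2 / (\<chi>1 j * \<rho>)) = (a i)\<^sup>2 * \<rho>^3" for i
    proof -
      have "vsum L dv (\<lambda>j. (Pi_f L dv \<rho> \<chi>1 (f n) (g n) i j)\<^sup>2 / (\<chi>1 j * \<rho>)) = vsum L dv (\<lambda>j. ((a i)\<^sup>2 * \<rho>^3) * \<chi>1 j)"
      proof (rule vsum_cong)
        fix j assume "j \<in> Jset L"
        hence "\<chi>1 j > 0" using chi1_pos by auto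
        thus "(Pi_f L dv \<rho> \<chi>1 (f n) (g n) i j)\<^sup>2 / (\<chi>1 j * \<rho>) = ((a i)\<^sup>2 * \<rho>^3) * \<chi>1 j"
          unfolding Pi_f_def aI using rho_pos by (simp add: field_simps power2_eq_square power3_eq_cube)
      qed
      thus ?thesis by (simp add: vsum_cmult chi1_mass)
    qed
    have e2: "vsum L dv (\<lambda>j. (Pi_g L dv \<rho> \<chi>2 (f n) (g n) i j)\<^sup>2 * \<rho> / \<chi>2 j) = (a i)\<^sup>2 * \<rho>" for i
    proof -
      have "vsum L dv (\<lambda>j. (Pi_g L dv \<rho> \<chi>2 (f n) (g n) i j)\<^sup>2 * \<rho> / \<chi>2 j) = vsum L dv (\<lambda>j. ((a i)\<^sup>2 * \<rho>) * \<chi>2 j)"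
      proof (rule vsum_cong)
        fix j assume "j \<in> Jset L"
        hence "\<chi>2 j > 0" using chi2_pos by auto
        thus "(Pi_g L dv \<rho> \<chi>2 (f n) (g n) i j)\<^sup>2 * \<rho> / \<chi>2 j = ((a i)\<^sup>2 * \<rho>) * \<chi>2 j"
          unfolding Pi_g_def aI using rho_pos by (simp add: field_simps power2_eq_square)
      qed
      thus ?thesis by (simp add: vsum_cmult chi2_mass)
    qed
    have e3: "(a i)\<^sup>2 * \<rho>^3 + (a i)\<^sup>2 * \<rho> = (\<rho> / (\<rho>\<^sup>2 + 1)) * (vsum L dv (\<lambda>j. f n i j - g n i j))\<^sup>2" for i
    proof -
      have k: "(x / K)\<^sup>2 * \<rho> * K = \<rho> / K * x\<^sup>2" if "K \<noteq> 0" for x K :: real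
        using that by (simp add: power2_eq_square field_simps)
      have "(a i)\<^sup>2 * \<rho>^3 + (a i)\<^sup>2 * \<rho> = (a i)\<^sup>2 * \<rho> * (\<rho>\<^sup>2 + 1)"
        by (simp add: algebra_simps power2_eq_square power3_eq_cube)
      also have "\<dots> = \<rho> / (\<rho>\<^sup>2 + 1) * (vsum L dv (f n i) - vsum L dv (g n i))\<^sup>2"
        unfolding a_def using k rho2 by simp
      finally show ?thesis by (simp add: vsum_diff)
    qed
    have "Dnorm N L dx dv \<rho> \<chi>1 \<chi>2 (Pi_f L dv \<rho> \<chi>1 (f n) (g n)) (Pi_g L dv \<rho> \<chi>2 (f n) (g n))
        = sqrt (\<Sum>i<N. (\<rho> / (\<rho>\<^sup>2 + 1)) * (dx * (vsum L dv (\<lambda>j. f n i j - g n i j))\<^sup>2))"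
      unfolding Dnorm_eq e1 e2 e3 by (simp add: algebra_simps)
    also have "\<dots> = sqrt (\<rho> / (\<rho>\<^sup>2 + 1)) * l2norm N dx (\<lambda>i. vsum L dv (\<lambda>j. f n i j - g n i j))"
      unfolding l2norm_def sum_distrib_left[symmetric] by (rule real_sqrt_mult)
    finally have "sqrt ((\<rho>\<^sup>2 + 1) / \<rho>) * Dnorm N L dx dv \<rho> \<chi>1 \<chi>2 (Pi_f L dv \<rho> \<chi>1 (f n) (g n)) (Pi_g L dv \<rho> \<chi>2 (f n) (g n))
       = sqrt ((\<rho>\<^sup>2 + 1) / \<rho> * (\<rho> / (\<rho>\<^sup>2 + 1))) * l2norm N dx (\<lambda>i. vsum L dv (\<lambda>j. f n i j - g n i j))"
      by (simp only: real_sqrt_mult mult.assoc)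
    also have "(\<rho>\<^sup>2 + 1) / \<rho> * (\<rho> / (\<rho>\<^sup>2 + 1)) = 1" using rho2 rho_pos by simp
    finally show ?thesis by simp
  qed
  have c2: "l2norm N dx (\<lambda>i. vsum L dv (\<lambda>j. vel dv j * (f n i j - g n i j)))
     \<le> sqrt (2 * M) * Dnorm N L dx dv \<rho> \<chi>1 \<chi>2 (f n) (g n)"
    using gen_bound[OF dv dx_pos rho_pos chi1_pos chi2_pos _ _ MJ1 MJ2, of 1 1 1 N "f n" "g n"]
    by (simp add: vsum_mdiff)
  have c3: "l2norm N dx (\<lambda>i. vsum L dv (\<lambda>j. vel dv j * (f n i j - g n i j)))
     \<le> sqrt (2 * M) * Dnorm N L dx dv \<rho> \<chi>1 \<chi>2 f' g'"
    using gen_bound[OF dv dx_pos rho_pos chi1_pos chi2_pos _ _ MJ1 MJ2, of 1 1 1 N f' g']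
    by (simp add: vsum_mdiff Jf' Jg')
  have c5: "l2norm N dx (\<lambda>i. inverse \<rho> * vsum L dv (\<lambda>j. vel dv j * f n i j) - \<rho> * vsum L dv (\<lambda>j. vel dv j * g n i j))
     \<le> max (inverse \<rho>) \<rho> * sqrt (2 * M) * Dnorm N L dx dv \<rho> \<chi>1 \<chi>2 f' g'"
    using gen_bound[OF dv dx_pos rho_pos chi1_pos chi2_pos _ _ MJ1 MJ2, of "inverse \<rho>" "max (inverse \<rho>) \<rho>" \<rho> N f' g'] rho_pos
    by (simp add: Jf' Jg')
  define \<phi> where "\<phi> = (\<lambda>j. (vel dv j)\<^sup>2 - D0)"
  define MS where "MS = max (\<rho> * (Q1up - 2 * D0lo * D1lo + D0up\<^sup>2)) (inverse \<rho> * (Q2up - 2 * D0lo * D2lo + D0up\<^sup>2))"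
  have sq0: "D0\<^sup>2 \<le> D0up\<^sup>2" using D0pos D0_bounds by (intro power_mono) auto
  have pr1: "D0lo * E1lo \<le> D0 * E1"
    if "0 < E1lo" "E1lo \<le> E1" for E1lo E1 :: real
  proof (cases "D0lo \<le> 0")
    case True
    hence "D0lo * E1lo \<le> 0" using that by (simp add: mult_nonpos_nonneg)
    moreover have "0 \<le> D0 * E1" using D0pos that by simp
    ultimately show ?thesis by linarith
  next
    case False
    thus ?thesis using that D0_bounds by (intro mult_mono) auto
  qed
  have MS1: "\<rho> * vsum L dv (\<lambda>j. (\<phi> j)\<^sup>2 * \<chi>1 j) \<le> MS"
  proof -
    have "vsum L dv (\<lambda>j. (\<phi> j)\<^sup>2 * \<chi>1 j) = Q1 - 2 * D0 * D1 + D0\<^sup>2"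
      unfolding \<phi>_def vsum_sq_expand Q1_def D1_def chi1_mass by simp
    also have "\<dots> \<le> Q1up - 2 * D0lo * D1lo + D0up\<^sup>2"
      using Q1_bound sq0 pr1[OF D1_bounds(1,2)] by linarith
    finally show ?thesis unfolding MS_def using rho_pos
      by (intro max.coboundedI1 mult_left_mono) auto
  qed
  have MS2: "inverse \<rho> * vsum L dv (\<lambda>j. (\<phi> j)\<^sup>2 * \<chi>2 j) \<le> MS"
  proof -
    have "vsum L dv (\<lambda>j. (\<phi> j)\<^sup>2 * \<chi>2 j) = Q2 - 2 * D0 * D2 + D0\<^sup>2"
      unfolding \<phi>_def vsum_sq_expand Q2_def D2_def chi2_mass by simp
    also have "\<dots> \<le> Q2up - 2 * D0lo * D2lo + D0up\<^sup>2"
      using Q2_bound sq0 pr1[OF D2_bounds(1,2)] by linarith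
    finally show ?thesis unfolding MS_def using rho_pos
      by (intro max.coboundedI2 mult_left_mono) auto
  qed
  have p1: "vsum L dv (\<lambda>j. \<phi> j * \<chi>1 j) = D1 - D0"
    unfolding \<phi>_def D1_def using vsum_diff[of L dv "\<lambda>j. (vel dv j)\<^sup>2 * \<chi>1 j" "\<lambda>j. D0 * \<chi>1 j"]
    by (simp add: algebra_simps vsum_cmult chi1_mass)
  have p2: "vsum L dv (\<lambda>j. \<phi> j * \<chi>2 j) = D2 - D0"
    unfolding \<phi>_def D2_def using vsum_diff[of L dv "\<lambda>j. (vel dv j)\<^sup>2 * \<chi>2 j" "\<lambda>j. D0 * \<chi>2 j"]
    by (simp add: algebra_simps vsum_cmult chi2_mass)
  have Pz: "x / (\<rho>\<^sup>2 + 1) * \<rho>\<^sup>2 * (D1 - D0) + x / (\<rho>\<^sup>2 + 1) * (D2 - D0) = 0" for x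
  proof -
    have "x / (\<rho>\<^sup>2 + 1) * \<rho>\<^sup>2 * (D1 - D0) + x / (\<rho>\<^sup>2 + 1) * (D2 - D0)
       = x / (\<rho>\<^sup>2 + 1) * (\<rho>\<^sup>2 * D1 + D2 - (\<rho>\<^sup>2 + 1) * D0)" by (simp only: algebra_simps)
    thus ?thesis using D0eq by simp
  qed
  have Sh': "vsum L dv (\<lambda>j. \<phi> j * f' i j) - vsum L dv (\<lambda>j. \<phi> j * g' i j)
      = vsum L dv (\<lambda>j. \<phi> j * (f n i j - g n i j))" for i
    unfolding f'_def g'_def vsum_mdiff vsum_Pi_f vsum_Pi_g p1 p2
    using Pz[of "vsum L dv (f n i) - vsum L dv (g n i)"] by (simp add: algebra_simps)
  have c4: "l2norm N dx (\<lambda>i. vsum L dv (\<lambda>j. \<phi> j * (f n i j - g n i j)))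
     \<le> sqrt (2 * MS) * Dnorm N L dx dv \<rho> \<chi>1 \<chi>2 f' g'"
    using gen_bound[OF dv dx_pos rho_pos chi1_pos chi2_pos _ _ MS1 MS2, of 1 1 1 N f' g']
    by (simp add: Sh')
  show ?thesis
    unfolding Let_def
    using c1 c2 c3 c4 c5
    unfolding M_def MS_def \<phi>_def f'_def g'_def
    by (simp add: vsum_mdiff)
qed

end
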